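(* Let $1\le d\le n$ be integers with $\gcd(n,d)=1$, and let $2^a$ be the largest power of $2$ dividing $n$. Then $(n,d)$ is a critical pair if and only if $d^2\equiv1\pmod n$, $a\ge1$, and $d\equiv\pm1\pmod{2^a}$.
   Context: A pair of positive integers $(n,d)$ with $d<n$ and $\gcd(n,d)=1$ is a critical pair if the Hirzebruch–Jung expansion $(a_0,\dots,a_r)$ of $n/d$ (defined by $\frac nd=a_0-1/(a_1-1/(\cdots-1/a_r))$, $a_i\ge2$) is symmetric ($a_i=a_{r-i}$ for all $i$), of odd length ($r$ even), and has even central term $a_{r/2}$. The pair $(1,1)$ is not critical. *)

theory Defs
  imports "HOL-Computational_Algebra.Computational_Algebra" "HOL-Number_Theory.Cong"
begin

text \<open>Hirzebruch-Jung (negative) continued fraction expansion of n/d, for 0 < d: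
  n/d = a0 - 1/(a1 - 1/(... - 1/ar)).\<close>
function hj_expansion :: "nat \<Rightarrow> nat \<Rightarrow> nat list" where
  "hj_expansion n d =
     (if d = 0 then []
      else (let a0 = (n + d - 1) div d; r = a0 * d - n in
            if r = 0 then [a0] else a0 # hj_expansion d r))"
  by pat_completeness auto
termination
proof (relation "measure snd", goal_cases)
  case 1 then show ?case by simp
next
  case (2 n d a0 r)
  define k where "k = (n + d - 1) div d * d"
  have "k \<le> n + d - 1" unfolding k_def by (rule div_times_less_eq_dividend)
  then have "k - n < d" using 2(1) by linarith
  then show ?case using 2 by (simp add: k_def)
qed

definition critical_pair :: "nat \<Rightarrow> nat \<Rightarrow> bool" where
  "critical_pair n d \<longleftrightarrow>
     0 < d \<and> d < n \<and> coprime n d \<and>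
     (let as = hj_expansion n d in
        rev as = as \<and> odd (length as) \<and> even (as ! (length as div 2)))"

end

theory Submission
  imports Defs
begin
declare hj_expansion.simps[simp del]

type_synonym m4 = "int \<times> int \<times> int \<times> int"

fun mmul :: "m4 \<Rightarrow> m4 \<Rightarrow> m4" where
  "mmul (a,b,c,d) (e,f,g,h) = (a*e+b*g, a*f+b*h, c*e+d*g, c*f+d*h)"

definition MM :: "int \<Rightarrow> m4" where "MM a = (a, -1, 1, 0)"

fun mat :: "nat list \<Rightarrow> m4" where
  "mat [] = (1,0,0,1)"
| "mat (a#as) = mmul (MM (int a)) (mat as)"

fun tr :: "m4 \<Rightarrow> m4" where "tr (a,b,c,d) = (a,-c,-b,d)"

fun det4 :: "m4 \<Rightarrow> int" where "det4 (a,b,c,d) = a*d - b*c"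

lemma mmul_assoc: "mmul (mmul x y) z = mmul x (mmul y z)"
  by (cases x; cases y; cases z) (simp add: algebra_simps)

lemma mmul_id: "mmul x (1,0,0,1) = x" "mmul (1,0,0,1) x = x"
  by (cases x; simp)+

lemma mat_append: "mat (xs @ ys) = mmul (mat xs) (mat ys)"
  by (induction xs) (simp_all add: mmul_id mmul_assoc)

lemma det_mmul: "det4 (mmul x y) = det4 x * det4 y"
  by (cases x; cases y) (simp add: algebra_simps)

lemma det_mat: "det4 (mat as) = 1"
  by (induction as) (simp_all add: det_mmul MM_def)

lemma tr_mmul: "tr (mmul x y) = mmul (tr y) (tr x)"
  by (cases x; cases y) (simp add: algebra_simps)

lemma mat_rev: "mat (rev as) = tr (mat as)"
proof (induction as)
  case (Cons a as)
  have "mat (rev (a#as)) = mmul (mat (rev as)) (mat [a])" by (simp add: mat_append)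
  also have "\<dots> = mmul (tr (mat as)) (tr (MM (int a)))" using Cons by (simp add: MM_def mmul_id)
  also have "\<dots> = tr (mat (a#as))" by (simp add: tr_mmul)
  finally show ?case .
qed simp

lemma hj_nonempty: "0 < d \<Longrightarrow> hj_expansion n d \<noteq> []"
  by (subst hj_expansion.simps) (simp add: Let_def)

lemma ceil_ge: "0 < (d::nat) \<Longrightarrow> n \<le> (n + d - 1) div d * d"
proof -
  assume d: "0 < d"
  have "(n + d - 1) div d * d + (n + d - 1) mod d = n + d - 1" by simp
  moreover have "(n + d - 1) mod d < d" using d by simp
  ultimately show ?thesis by linarith
qed

lemma hj_mat: "0 < d \<Longrightarrow> coprime n d \<Longrightarrow> \<exists>x y. mat (hj_expansion n d) = (int n, x, int d, y)"
proof (induction n d rule: hj_expansion.induct)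
  case (1 n d)
  define a0 where "a0 = (n + d - 1) div d"
  define r where "r = a0 * d - n"
  have ge: "n \<le> a0 * d" using ceil_ge[OF 1(2)] a0_def by simp
  have e: "hj_expansion n d = (if r = 0 then [a0] else a0 # hj_expansion d r)"
    using 1(2) by (subst hj_expansion.simps) (simp add: Let_def a0_def r_def)
  show ?case
  proof (cases "r = 0")
    case True
    then have "n = a0 * d" using ge r_def by simp
    then have "d = 1" using 1(3) by simp
    then show ?thesis using e True \<open>n = a0 * d\<close> by (simp add: MM_def)
  next
    case False
    have cop: "coprime d r"
    proof -
      have "gcd d r = gcd d n"
      proof -
        have "int r = int a0 * int d - int n" using ge r_def by simp
        then have "gcd (int d) (int r) = gcd (int d) (int n)"
          by (metis gcd.commute gcd_add_mult add.commute diff_conv_add_uminus gcd_neg2_int mult.commute minus_diff_eq)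
        then show ?thesis by simp
      qed
      then show ?thesis using 1(3) by (simp add: coprime_iff_gcd_eq_1 gcd.commute)
    qed
    obtain x y where xy: "mat (hj_expansion d r) = (int d, x, int r, y)"
      using 1(1)[OF _ a0_def r_def False] 1(2) False cop by blast
    have "int n = int a0 * int d - int r" using ge r_def by simp
    then show ?thesis using e False xy by (simp add: MM_def)
  qed
qed


lemma ceil_le: "0 < (d::nat) \<Longrightarrow> (n + d - 1) div d * d \<le> n + d - 1"
  by (rule div_times_less_eq_dividend)

lemma hj_ge2: "0 < d \<Longrightarrow> d < n \<Longrightarrow> \<forall>a\<in>set (hj_expansion n d). 2 \<le> a"
proof (induction n d rule: hj_expansion.induct)
  case (1 n d)
  define a0 where "a0 = (n + d - 1) div d"
  define r where "r = a0 * d - n"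
  have ge: "n \<le> a0 * d" using ceil_ge[OF 1(2)] a0_def by simp
  have le: "a0 * d \<le> n + d - 1" using ceil_le[OF 1(2)] a0_def by simp
  have e: "hj_expansion n d = (if r = 0 then [a0] else a0 # hj_expansion d r)"
    using 1(2) by (subst hj_expansion.simps) (simp add: Let_def a0_def r_def)
  have a2: "2 \<le> a0"
  proof -
    have "2 * d \<le> n + d - 1" using 1(3) by simp
    then have "2 * d div d \<le> (n + d - 1) div d" by (rule div_le_mono)
    then show ?thesis using 1(2) a0_def by simp
  qed
  show ?case
  proof (cases "r = 0")
    case True
    then show ?thesis using e a2 by simp
  next
    case False
    have "r < d" using le r_def 1(2) by simp
    then have "\<forall>a\<in>set (hj_expansion d r). 2 \<le> a"
      using 1(1)[OF _ a0_def r_def False] 1(2) False by blast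
    then show ?thesis using e False a2 by simp
  qed
qed

lemma div_eq_aux: "t < (p::nat) \<Longrightarrow> (a * p + t) div p = a"
  by simp

lemma hj_unique: "as \<noteq> [] \<Longrightarrow> \<forall>a\<in>set as. 2 \<le> a \<Longrightarrow>
   \<exists>P Q x y. mat as = (int P, x, int Q, y) \<and> Q < P \<and> 1 \<le> Q \<and> hj_expansion P Q = as"
proof (induction as)
  case Nil
  then show ?case by simp
next
  case (Cons a bs)
  show ?case
  proof (cases "bs = []")
    case True
    have "hj_expansion a 1 = [a]" by (subst hj_expansion.simps) (simp add: Let_def)
    then show ?thesis using True Cons(3) by (auto simp: MM_def)
  next
    case False
    then obtain P Q x y where IH: "mat bs = (int P, x, int Q, y)" "Q < P" "1 \<le> Q" "hj_expansion P Q = bs"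
      using Cons by auto
    have a2: "2 \<le> a" using Cons(3) by simp
    have "2 * P \<le> a * P" using a2 by simp
    then have QP: "Q \<le> a * P" using IH(2) by linarith
    define N where "N = a * P - Q"
    have NP: "P < N" using \<open>2 * P \<le> a * P\<close> IH(2) N_def by linarith
    have "N + P - 1 = a * P + (P - Q - 1)" using N_def QP IH(2) IH(3) by simp
    then have a0: "(N + P - 1) div P = a" using div_eq_aux[of "P - Q - 1" P a] IH(2) by simp
    have r: "a * P - N = Q" using N_def QP IH(2) IH(3) by simp
    have "hj_expansion N P = (if a*P - N = 0 then [a] else a # hj_expansion P (a*P - N))"
      using IH(2,3) a0 by (subst hj_expansion.simps) (simp add: Let_def)
    then have "hj_expansion N P = a # bs" using r IH(3,4) by simp
    moreover have "mat (a # bs) = (int N, int a * x - y, int P, x)"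
      using IH(1) QP N_def by (simp add: MM_def of_nat_diff)
    ultimately show ?thesis using NP IH(2,3) by (intro exI[of _ N] exI[of _ P]) auto
  qed
qed


lemma dvd_small_eq: "(n::int) dvd (a - b) \<Longrightarrow> 0 < a \<Longrightarrow> a < n \<Longrightarrow> 0 < b \<Longrightarrow> b < n \<Longrightarrow> a = b"
proof (rule ccontr)
  assume h: "n dvd (a - b)" "0 < a" "a < n" "0 < b" "b < n" "a \<noteq> b"
  then have "\<bar>n\<bar> \<le> \<bar>a - b\<bar>" by (intro dvd_imp_le_int) auto
  then show False using h by linarith
qed

lemma pal_iff:
  assumes "0 < d" "d < n" "coprime n d"
  shows "rev (hj_expansion n d) = hj_expansion n d \<longleftrightarrow> [d ^ 2 = 1] (mod n)"
proof -
  define as where "as = hj_expansion n d"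
  obtain x y where m: "mat as = (int n, x, int d, y)" using hj_mat assms as_def by blast
  have det: "int n * y - x * int d = 1" using det_mat[of as] m by simp
  have mr: "mat (rev as) = (int n, - int d, - x, y)" using m by (simp add: mat_rev)
  have "[d ^ 2 = 1] (mod n) \<longleftrightarrow> int n dvd (int d ^ 2 - 1)"
  proof -
    have "[d ^ 2 = 1] (mod n) \<longleftrightarrow> [int (d ^ 2) = int 1] (mod int n)" by (rule cong_int_iff[symmetric])
    also have "\<dots> \<longleftrightarrow> int n dvd (int (d ^ 2) - int 1)" by (rule cong_iff_dvd_diff)
    finally show ?thesis by simp
  qed
  moreover have "rev as = as \<longleftrightarrow> int n dvd (int d ^ 2 - 1)"
  proof
    assume "rev as = as"
    then have mm: "mat as = mat (rev as)" by simp
    have "(int n, x, int d, y) = (int n, - int d, - x, y)" using trans[OF trans[OF m[symmetric] mm] mr] .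
    then have "fst (snd (int n, x, int d, y)) = fst (snd (int n, - int d, - x, y))" by (rule arg_cong)
    then have "x = - int d" by (simp only: fst_conv snd_conv)
    then have "int d ^ 2 - 1 = int n * (- y)" using det by (simp add: power2_eq_square algebra_simps)
    then show "int n dvd (int d ^ 2 - 1)" by simp
  next
    assume dv: "int n dvd (int d ^ 2 - 1)"
    have ne: "rev as \<noteq> []" using hj_nonempty assms as_def by simp
    have g2: "\<forall>a\<in>set (rev as). 2 \<le> a" using hj_ge2 assms as_def by simp
    obtain P Q x' y' where u: "mat (rev as) = (int P, x', int Q, y')" "Q < P" "1 \<le> Q" "hj_expansion P Q = rev as"
      using hj_unique[OF ne g2] by blast
    have "(int P, x', int Q, y') = (int n, - int d, - x, y)" using trans[OF u(1)[symmetric] mr] .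
    then have e1: "fst (int P, x', int Q, y') = fst (int n, - int d, - x, y)"
      and e2: "fst (snd (snd (int P, x', int Q, y'))) = fst (snd (snd (int n, - int d, - x, y)))" by simp_all
    have PQ: "P = n" "int Q = - x" using e1 e2 by (simp_all only: fst_conv snd_conv of_nat_eq_iff)
    have "int n dvd (int Q * int d - 1)" 
    proof -
      have "int Q * int d - 1 = int n * (- y)" using det PQ(2) by (simp add: algebra_simps)
      then show ?thesis by simp
    qed
    then have "int n dvd ((int Q * int d - 1) - (int d ^ 2 - 1))" using dv by (rule dvd_diff)
    then have "int n dvd (int d * (int Q - int d))" by (simp add: power2_eq_square algebra_simps)
    moreover have "coprime (int n) (int d)" using assms by simp
    ultimately have "int n dvd (int Q - int d)" using coprime_dvd_mult_right_iff by blast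
    then have "int Q = int d" using dvd_small_eq[of "int n" "int Q" "int d"] u PQ assms by simp
    then have "Q = d" by simp
    then have "hj_expansion n d = rev as" using u(4) PQ(1) by simp
    then show "rev as = as" using as_def by simp
  qed
  ultimately show ?thesis using as_def by simp
qed


lemma cop2: "odd (C::int) \<Longrightarrow> coprime ((2::int)^a) C"
  by simp

lemma odd_center:
  fixes A B C D c dd N :: int and a :: nat
  assumes det: "A*D - B*C = 1" and oc: "odd c"
    and N: "N = A*(c*A+2*B)" and d1: "dd - 1 = C*(c*A+2*B)" and d2: "dd + 1 = A*(c*C+2*D)"
    and dv: "2^a dvd N" and nd: "\<not> 2^Suc a dvd N" and a1: "1 \<le> a"
  shows "\<not> [dd = 1] (mod 2^a) \<and> \<not> [dd = -1] (mod 2^a)"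
proof -
  define m where "m = c*A+2*B"
  define k where "k = c*C+2*D"
  have "(2::int) dvd 2^a" using a1 by (simp add: dvd_power)
  then have eN: "even N" using dv by (rule dvd_trans)
  have eA: "even A"
  proof (rule ccontr)
    assume "odd A"
    then have "odd m" using oc m_def by simp
    then show False using eN N m_def \<open>odd A\<close> by simp
  qed
  have oB: "odd B" and oC: "odd C"
  proof -
    have "odd (A*D - B*C)" using det by simp
    then show "odd B" "odd C" using eA by auto
  qed
  have em: "even m" using eA m_def by simp
  have ok: "odd k" using oc oC k_def by simp
  show ?thesis
  proof
    show "\<not> [dd = 1] (mod 2^a)"
    proof
      assume "[dd = 1] (mod 2^a)"
      then have "2^a dvd C * m" using d1 m_def by (simp add: cong_iff_dvd_diff)
      then have "2^a dvd m" using cop2[OF oC] coprime_dvd_mult_right_iff by blast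
      then have "2 * 2^a dvd A * m" using eA by (intro mult_dvd_mono)
      then show False using nd N m_def by (simp add: mult.commute)
    qed
    show "\<not> [dd = -1] (mod 2^a)"
    proof
      assume "[dd = -1] (mod 2^a)"
      then have "2^a dvd A * k" using d2 k_def by (simp add: cong_iff_dvd_diff)
      then have "2^a dvd A" using cop2[OF ok] coprime_dvd_mult_left_iff by blast
      then have "2^a * 2 dvd A * m" using em by (intro mult_dvd_mono)
      then show False using nd N m_def by (simp add: mult.commute)
    qed
  qed
qed

lemma even_center:
  fixes A B C D c dd N :: int and a :: nat
  assumes det: "A*D - B*C = 1" and ec: "even c"
    and N: "N = A*(c*A+2*B)" and d1: "dd - 1 = C*(c*A+2*B)" and d2: "dd + 1 = A*(c*C+2*D)"
    and dv: "2^a dvd N" and nd: "\<not> 2^Suc a dvd N"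
  shows "1 \<le> a \<and> ([dd = 1] (mod 2^a) \<or> [dd = -1] (mod 2^a))"
proof -
  define m where "m = c*A+2*B"
  define k where "k = c*C+2*D"
  have em: "even m" using ec m_def by simp
  have a1: "1 \<le> a"
  proof (rule ccontr)
    assume "\<not> 1 \<le> a"
    then have "a = 0" by simp
    then show False using nd N m_def em by simp
  qed
  have "[dd = 1] (mod 2^a) \<or> [dd = -1] (mod 2^a)"
  proof (cases "even A")
    case False
    have "2^a dvd A * m" using dv N m_def by simp
    then have "2^a dvd m" using cop2[OF False] coprime_dvd_mult_left_iff by (metis mult.commute)
    then have "2^a dvd C * m" by simp
    then show ?thesis using d1 m_def by (simp add: cong_iff_dvd_diff)
  next
    case True
    have oB: "odd B"
    proof -
      have "odd (A*D - B*C)" using det by simp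
      then show "odd B" using True by auto
    qed
    obtain c2 where c2: "c = 2 * c2" using ec by (auto elim: evenE)
    define m' where "m' = c2 * A + B"
    have mm: "m = 2 * m'" using m_def m'_def c2 by (simp add: algebra_simps)
    have om: "odd m'" using m'_def True oB by simp
    have "2^a dvd (2 * A) * m'" using dv N m_def mm by (simp add: algebra_simps)
    then have h: "2^a dvd 2 * A" using cop2[OF om] coprime_dvd_mult_left_iff by blast
    obtain D2 where k2: "k = 2 * (c2 * C + D)" using k_def c2 by (simp add: algebra_simps)
    have "2 * A dvd A * k" using k2 by simp
    then have "2^a dvd A * k" using h by (rule dvd_trans[rotated])
    then show ?thesis using d2 k_def by (simp add: cong_iff_dvd_diff)
  qed
  then show ?thesis using a1 by simp
qed

lemma even_length:
  fixes A B C D dd N :: int and a :: nat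
  assumes det: "A*D - B*C = 1"
    and N: "N = (A+B)*(A-B)" and d1: "dd - 1 = (A+B)*(C-D)" and d2: "dd + 1 = (A-B)*(C+D)"
    and dv: "2^a dvd N" and nd: "\<not> 2^Suc a dvd N" and a1: "1 \<le> a"
  shows "\<not> [dd = 1] (mod 2^a) \<and> \<not> [dd = -1] (mod 2^a)"
proof -
  have "(2::int) dvd 2^a" using a1 by (simp add: dvd_power)
  then have eN: "even N" using dv by (rule dvd_trans)
  have oAB: "odd A \<and> odd B"
  proof -
    have "odd (A*D - B*C)" using det by simp
    moreover have "even (A+B) \<or> even (A-B)" using eN N by simp
    ultimately show ?thesis by auto
  qed
  have oCD: "odd (C-D)" "odd (C+D)"
  proof -
    have "odd (A*D - B*C)" using det by simp
    then show "odd (C-D)" "odd (C+D)" using oAB by auto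
  qed
  have e1: "even (A+B)" "even (A-B)" using oAB by auto
  show ?thesis
  proof
    show "\<not> [dd = 1] (mod 2^a)"
    proof
      assume "[dd = 1] (mod 2^a)"
      then have "2^a dvd (A+B)*(C-D)" using d1 by (simp add: cong_iff_dvd_diff)
      then have "2^a dvd (A+B)" using cop2[OF oCD(1)] coprime_dvd_mult_left_iff by blast
      then have "2^a * 2 dvd (A+B)*(A-B)" using e1 by (intro mult_dvd_mono)
      then show False using nd N by (simp add: mult.commute)
    qed
    show "\<not> [dd = -1] (mod 2^a)"
    proof
      assume "[dd = -1] (mod 2^a)"
      then have "2^a dvd (A-B)*(C+D)" using d2 by (simp add: cong_iff_dvd_diff)
      then have "2^a dvd (A-B)" using cop2[OF oCD(2)] coprime_dvd_mult_left_iff by blast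
      then have "2^a * 2 dvd (A-B)*(A+B)" using e1 by (intro mult_dvd_mono)
      then show False using nd N by (simp add: mult.commute)
    qed
  qed
qed


lemma pal_odd: "rev xs = xs \<Longrightarrow> length xs = 2*k+1 \<Longrightarrow> xs = take k xs @ [xs!k] @ rev (take k xs)"
proof -
  assume r: "rev xs = xs" and l: "length xs = 2*k+1"
  have "drop (k+1) xs = drop (k+1) (rev xs)" using r by simp
  also have "\<dots> = rev (take k xs)" using l by (simp add: drop_rev)
  finally have "drop (k+1) xs = rev (take k xs)" .
  moreover have "xs = take k xs @ [xs!k] @ drop (k+1) xs" using l
    by (metis Cons_nth_drop_Suc add_Suc_right append_Cons append_take_drop_id lessI less_add_Suc1 mult_2 self_append_conv2 add.commute plus_1_eq_Suc trans_less_add2)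
  ultimately show ?thesis by simp
qed

lemma pal_even: "rev xs = xs \<Longrightarrow> length xs = 2*k \<Longrightarrow> xs = take k xs @ rev (take k xs)"
proof -
  assume r: "rev xs = xs" and l: "length xs = 2*k"
  have "drop k xs = drop k (rev xs)" using r by simp
  also have "\<dots> = rev (take k xs)" using l by (simp add: drop_rev)
  finally have "drop k xs = rev (take k xs)" .
  then show ?thesis by (metis append_take_drop_id)
qed

lemma mat_odd: "mat u = (A,B,C,D) \<Longrightarrow> mat (u @ [c] @ rev u) =
   (A*(int c*A+2*B), -(int c*A*C + A*D + B*C), int c*A*C + A*D + B*C, -(int c*C*C + 2*C*D))"
  by (simp add: mat_append mat_rev MM_def algebra_simps)

lemma mat_even: "mat u = (A,B,C,D) \<Longrightarrow> mat (u @ rev u) =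
   (A*A - B*B, B*D - A*C, C*A - D*B, D*D - C*C)"
  by (simp add: mat_append mat_rev algebra_simps)


lemma mult2_facts:
  fixes n :: nat
  assumes "n \<noteq> 0"
  shows "(2::int) ^ multiplicity 2 n dvd int n" "\<not> (2::int) ^ Suc (multiplicity 2 n) dvd int n"
proof -
  have "(2::nat) ^ multiplicity 2 n dvd n" by (rule multiplicity_dvd)
  then show "(2::int) ^ multiplicity 2 n dvd int n" by (metis of_nat_dvd_iff of_nat_numeral of_nat_power)
  show "\<not> (2::int) ^ Suc (multiplicity 2 n) dvd int n"
  proof
    assume "(2::int) ^ Suc (multiplicity 2 n) dvd int n"
    then have "(2::nat) ^ Suc (multiplicity 2 n) dvd n" by (metis of_nat_dvd_iff of_nat_numeral of_nat_power)
    then have "multiplicity 2 n \<ge> Suc (multiplicity 2 n)" using assms by (intro multiplicity_geI) auto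
    then show False by simp
  qed
qed

theorem corollary1p8:
  fixes n d :: nat
  assumes "1 \<le> d" and "d \<le> n" and "coprime n d"
  shows "critical_pair n d \<longleftrightarrow>
           ([d ^ 2 = 1] (mod n) \<and> multiplicity 2 n \<ge> 1 \<and>
            ([int d = 1] (mod 2 ^ multiplicity 2 n) \<or> [int d = -1] (mod 2 ^ multiplicity 2 n)))"
proof (cases "d = n")
  case True
  then have "n = 1" using assms by simp
  then show ?thesis using True by (simp add: critical_pair_def)
next
  case False
  then have dn: "0 < d" "d < n" using assms by auto
  define as where "as = hj_expansion n d"
  define L where "L = length as"
  define a where "a = multiplicity 2 n"
  obtain x y where m: "mat as = (int n, x, int d, y)" using hj_mat dn assms(3) as_def by blast
  have dv: "(2::int)^a dvd int n" and nd: "\<not> (2::int)^Suc a dvd int n"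
    using mult2_facts[of n] dn a_def by auto
  have crit: "critical_pair n d \<longleftrightarrow> rev as = as \<and> odd L \<and> even (as ! (L div 2))"
    using dn assms(3) by (simp add: critical_pair_def as_def L_def Let_def)
  have pal: "rev as = as \<longleftrightarrow> [d ^ 2 = 1] (mod n)" using pal_iff dn assms(3) as_def by simp
  show ?thesis
  proof (cases "rev as = as")
    case False
    then show ?thesis using crit pal by simp
  next
    case True
    define k where "k = L div 2"
    define u where "u = take k as"
    obtain A B C D where U: "mat u = (A,B,C,D)" by (cases "mat u") auto
    have det: "A*D - B*C = 1" using det_mat[of u] U by simp
    show ?thesis
    proof (cases "odd L")
      case True
      define c where "c = as ! k"
      have Lk: "L = 2*k+1" using True k_def by simp
      have "as = u @ [c] @ rev u" using pal_odd[OF \<open>rev as = as\<close>] Lk L_def u_def c_def by simp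
      then have "mat as = (A*(int c*A+2*B), -(int c*A*C + A*D + B*C), int c*A*C + A*D + B*C, -(int c*C*C + 2*C*D))"
        using mat_odd[OF U] by simp
      then have e: "int n = A*(int c*A+2*B)" "int d = int c*A*C + A*D + B*C" using m by simp_all
      have d1: "int d - 1 = C*(int c*A+2*B)" using e det by (simp add: algebra_simps)
      have d2: "int d + 1 = A*(int c*C+2*D)" using e det by (simp add: algebra_simps)
      show ?thesis
      proof (cases "even c")
        case True
        have "1 \<le> a \<and> ([int d = 1] (mod 2^a) \<or> [int d = -1] (mod 2^a))"
          using even_center[OF det _ e(1) d1 d2 dv nd] True by simp
        then show ?thesis using crit pal \<open>rev as = as\<close> \<open>odd L\<close> True a_def c_def k_def by auto
      next
        case False
        have "1 \<le> a \<Longrightarrow> \<not> [int d = 1] (mod 2^a) \<and> \<not> [int d = -1] (mod 2^a)"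
          using odd_center[OF det _ e(1) d1 d2 dv nd] False by simp
        then show ?thesis using crit False a_def c_def k_def by auto
      qed
    next
      case False
      have Lk: "L = 2*k" using False k_def by simp
      have "as = u @ rev u" using pal_even[OF \<open>rev as = as\<close>] Lk L_def u_def by simp
      then have "mat as = (A*A - B*B, B*D - A*C, C*A - D*B, D*D - C*C)"
        using mat_even[OF U] by simp
      then have e: "int n = A*A - B*B" "int d = C*A - D*B" using m by simp_all
      have N: "int n = (A+B)*(A-B)" using e by (simp add: algebra_simps)
      have d1: "int d - 1 = (A+B)*(C-D)" using e det by (simp add: algebra_simps)
      have d2: "int d + 1 = (A-B)*(C+D)" using e det by (simp add: algebra_simps)
      have "1 \<le> a \<Longrightarrow> \<not> [int d = 1] (mod 2^a) \<and> \<not> [int d = -1] (mod 2^a)"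
        using even_length[OF det N d1 d2 dv nd] by simp
      then show ?thesis using crit False a_def by auto
    qed
  qed
qed

end
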